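(* Let $Q=(q_1,\dots,q_n)$ with $q_i\in\mathbb C\setminus\{0,1\}$, and let $\Lambda=(\lambda_{ij})$ be an $n\times n$ matrix over $\mathbb C\setminus\{0\}$ with $\lambda_{ii}=1$, $\lambda_{ij}=\lambda_{ji}^{-1}$. Let $G(Q,\Lambda)$ be the multiplicative subgroup of $\mathbb C^\times$ generated by all $q_i$ and $\lambda_{ij}$, and assume it is torsion free, hence free abelian of finite rank $r$. Fix a basis $\eta_1,\dots,\eta_r$ of $G(Q,\Lambda)$, a $\mathbb Q$-linearly independent subset $\{\mu_1,\dots,\mu_r\}$ of $\mathbb C$, and $q\in\mathbb C\setminus\{0,1\}$ not a root of unity. For each $i$ let $e_i\in\mathbb C[t]$ be the unique polynomial of degree at most $2$ with $e_i(q)=\eta_i$, $e_i(1)=1$, $e_i'(1)=\mu_i$. Let $\mathbf K$ be the set of $\lambda\in\mathbb C\setminus\{0,1\}$ such that $e_i(\lambda)\ne0$ for all $i$ and the multiplicative subgroup $\langle e_1(\lambda),\dots,e_r(\lambda)\rangle$ of $\mathbb C^\times$ is free abelian with basis $e_1(\lambda),\dots,e_r(\lambda)$. Then $\mathbf K$ is an infinite subset of $\mathbb C\setminus\{0,1\}$ and $q\in\mathbf K$.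
   Context: $e_i'$ denotes the formal derivative of $e_i$. *)

theory Defs
  imports Complex_Main "HOL-Computational_Algebra.Polynomial"
begin

text \<open>Multiplicative subgroup of the nonzero complex numbers generated by a set S
  (S is always assumed to consist of nonzero numbers): the smallest set containing S
  and 1 and closed under products and inverses.\<close>
definition gen_subgroup :: "complex set \<Rightarrow> complex set" where
  "gen_subgroup S = \<Inter> {H. S \<subseteq> H \<and> 1 \<in> H \<and> (\<forall>x\<in>H. \<forall>y\<in>H. x * y \<in> H)
                          \<and> (\<forall>x\<in>H. inverse x \<in> H)}"

definition torsion_free :: "complex set \<Rightarrow> bool" where
  "torsion_free H \<longleftrightarrow> (\<forall>g\<in>H. \<forall>k::nat. k > 0 \<longrightarrow> g ^ k = 1 \<longrightarrow> g = 1)"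

definition free_basis :: "nat \<Rightarrow> (nat \<Rightarrow> complex) \<Rightarrow> complex set \<Rightarrow> bool" where
  "free_basis r eta H \<longleftrightarrow>
     (\<forall>i<r. eta i \<noteq> 0 \<and> eta i \<in> H) \<and>
     H = gen_subgroup (eta ` {..<r}) \<and>
     (\<forall>a::nat \<Rightarrow> int. (\<Prod>i<r. eta i powi a i) = 1 \<longrightarrow> (\<forall>i<r. a i = 0))"

end

theory Submission
  imports Defs "HOL-Analysis.Analysis"
begin

lemma pd_pow1:
  fixes p :: "complex poly"
  assumes "poly p 1 = 1"
  shows "poly (pderiv (p ^ k)) 1 = of_nat k * poly (pderiv p) 1"
proof (induction k)
  case 0 then show ?case by simp
next
  case (Suc k)
  have "pderiv (p ^ Suc k) = p * pderiv (p^k) + p^k * pderiv p"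
    by (simp add: pderiv_mult)
  then show ?case using Suc assms by (simp add: algebra_simps)
qed

lemma pd_prod1:
  fixes f :: "nat \<Rightarrow> complex poly"
  assumes "finite I" "\<forall>i\<in>I. poly (f i) 1 = 1"
  shows "poly (\<Prod>i\<in>I. f i ^ k i) 1 = 1 \<and>
         poly (pderiv (\<Prod>i\<in>I. f i ^ k i)) 1 = (\<Sum>i\<in>I. of_nat (k i) * poly (pderiv (f i)) 1)"
  using assms
proof (induction I rule: finite_induct)
  case empty then show ?case by simp
next
  case (insert x F)
  have "pderiv (\<Prod>i\<in>insert x F. f i ^ k i) = f x ^ k x * pderiv (\<Prod>i\<in>F. f i ^ k i)
        + (\<Prod>i\<in>F. f i ^ k i) * pderiv (f x ^ k x)"
    using insert by (simp add: pderiv_mult)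
  then show ?case using insert pd_pow1[of "f x" "k x"] by (simp add: poly_prod)
qed

lemma in_gen: "x \<in> S \<Longrightarrow> x \<in> gen_subgroup S"
  unfolding gen_subgroup_def by blast

lemma powi_split:
  fixes x :: complex
  assumes "x \<noteq> 0"
  shows "x powi a = x ^ nat a / x ^ nat (- a)"
  using assms by (cases "a \<ge> 0") (auto simp: power_int_def field_simps)


theorem lemma2p5:
  fixes n r :: nat
    and Q :: "nat \<Rightarrow> complex"
    and Lam :: "nat \<Rightarrow> nat \<Rightarrow> complex"
    and eta mu :: "nat \<Rightarrow> complex"
    and q :: complex
    and e :: "nat \<Rightarrow> complex poly"
  assumes Q: "\<forall>i<n. Q i \<notin> {0, 1}"
    and Lam_nz: "\<forall>i<n. \<forall>j<n. Lam i j \<noteq> 0"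
    and Lam_diag: "\<forall>i<n. Lam i i = 1"
    and Lam_inv: "\<forall>i<n. \<forall>j<n. Lam i j = inverse (Lam j i)"
    and tf: "torsion_free (gen_subgroup ({Q i |i. i < n} \<union> {Lam i j |i j. i < n \<and> j < n}))"
    and basis: "free_basis r eta (gen_subgroup ({Q i |i. i < n} \<union> {Lam i j |i j. i < n \<and> j < n}))"
    and mu_indep: "\<forall>c::nat \<Rightarrow> rat. (\<Sum>i<r. of_rat (c i) * mu i) = 0 \<longrightarrow> (\<forall>i<r. c i = 0)"
    and q: "q \<notin> {0, 1}"
    and q_nonroot: "\<forall>k::nat. k > 0 \<longrightarrow> q ^ k \<noteq> 1"
    and e_deg: "\<forall>i<r. degree (e i) \<le> 2"
    and e_q: "\<forall>i<r. poly (e i) q = eta i"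
    and e_1: "\<forall>i<r. poly (e i) 1 = 1"
    and e_d1: "\<forall>i<r. poly (pderiv (e i)) 1 = mu i"
  defines "K \<equiv> {l. l \<notin> {0, 1} \<and> (\<forall>i<r. poly (e i) l \<noteq> 0) \<and>
                 free_basis r (\<lambda>i. poly (e i) l) (gen_subgroup ((\<lambda>i. poly (e i) l) ` {..<r}))}"
  shows "infinite K \<and> K \<subseteq> - {0, 1} \<and> q \<in> K"
proof -
  define P where "P a = (\<Prod>i<r. e i ^ nat (a i)) - (\<Prod>i<r. e i ^ nat (- a i))" for a :: "nat \<Rightarrow> int"
  define S where "S = (\<lambda>f i. if i < r then f i else 0) ` (PiE {..<r} (\<lambda>_. UNIV :: int set))"
  define S' where "S' = {a \<in> S. \<exists>i<r. a i \<noteq> 0}"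
  define B where "B = (\<Union>a\<in>S'. {l. poly (P a) l = 0})"
  define Z where "Z = (\<Union>i<r. {l. poly (e i) l = 0})"
  have enz: "e i \<noteq> 0" if "i < r" for i using e_1 that by auto
  have PZ: "P a \<noteq> 0" if "\<exists>i<r. a i \<noteq> 0" for a
  proof
    assume "P a = 0"
    hence eq: "(\<Prod>i<r. e i ^ nat (a i)) = (\<Prod>i<r. e i ^ nat (- a i))" unfolding P_def by simp
    have e1: "\<forall>i\<in>{..<r}. poly (e i) 1 = 1" using e_1 by auto
    have "(\<Sum>i<r. of_nat (nat (a i)) * poly (pderiv (e i)) 1) = (\<Sum>i<r. of_nat (nat (- a i)) * poly (pderiv (e i)) 1)"
      using pd_prod1[OF _ e1, of "\<lambda>i. nat (a i)"] pd_prod1[OF _ e1, of "\<lambda>i. nat (- a i)"] eq by simp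
    hence "(\<Sum>i<r. of_nat (nat (a i)) * mu i) = (\<Sum>i<r. of_nat (nat (- a i)) * mu i)"
      using e_d1 by simp
    hence "(\<Sum>i<r. (of_nat (nat (a i)) - of_nat (nat (- a i))) * mu i) = 0"
      by (simp add: algebra_simps sum_subtractf)
    moreover have "of_nat (nat (a i)) - of_nat (nat (- a i)) = (of_int (a i) :: complex)" for i
      by (cases "a i \<ge> 0") auto
    ultimately have "(\<Sum>i<r. of_rat (of_int (a i)) * mu i) = 0" by simp
    with mu_indep[rule_format, of "\<lambda>i. of_int (a i)"] have "\<forall>i<r. (of_int (a i) :: rat) = 0" by blast
    with that show False by auto
  qed
  have cS: "countable S" unfolding S_def by (intro countable_image countable_PiE) auto
  have cB: "countable B" unfolding B_def S'_def
    using cS PZ by (intro countable_UN) (auto intro!: countable_finite poly_roots_finite)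
  have cZ: "countable Z" unfolding Z_def
    using enz by (intro countable_UN) (auto intro!: countable_finite poly_roots_finite)
  have fb: "free_basis r (\<lambda>i. poly (e i) l) (gen_subgroup ((\<lambda>i. poly (e i) l) ` {..<r}))"
    if nz: "\<forall>i<r. poly (e i) l \<noteq> 0" and nB: "l \<notin> B" for l
    unfolding free_basis_def
  proof (intro conjI allI impI)
    fix a :: "nat \<Rightarrow> int" and j assume pr: "(\<Prod>i<r. poly (e i) l powi a i) = 1" and j: "j < r"
    define a' where "a' = (\<lambda>i. if i < r then a i else 0)"
    have "a' \<in> S" unfolding S_def a'_def
      by (rule image_eqI[of _ _ "restrict a {..<r}"]) auto
    have "(\<Prod>i<r. poly (e i) l ^ nat (a i) / poly (e i) l ^ nat (- a i)) = 1"
      using pr nz powi_split by simp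
    hence "(\<Prod>i<r. poly (e i) l ^ nat (a i)) / (\<Prod>i<r. poly (e i) l ^ nat (- a i)) = 1"
      by (simp add: prod_dividef)
    moreover have "(\<Prod>i<r. poly (e i) l ^ nat (- a i)) \<noteq> 0" using nz by (simp add: prod_zero_iff)
    ultimately have "(\<Prod>i<r. poly (e i) l ^ nat (a i)) = (\<Prod>i<r. poly (e i) l ^ nat (- a i))"
      by (simp add: divide_eq_1_iff)
    hence "poly (P a') l = 0" unfolding P_def a'_def by (simp add: poly_prod)
    show "a j = 0"
    proof (rule ccontr)
      assume "a j \<noteq> 0"
      hence "a' \<in> S'" using \<open>a' \<in> S\<close> j unfolding S'_def a'_def by auto
      with \<open>poly (P a') l = 0\<close> nB show False unfolding B_def by auto
    qed
  qed (use nz in \<open>auto intro: in_gen\<close>)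
  have sub: "UNIV - {0, 1} - Z - B \<subseteq> K"
    unfolding K_def Z_def using fb by auto
  have "infinite K"
  proof
    assume "finite K"
    hence "countable (K \<union> {0,1} \<union> Z \<union> B)" using cB cZ by (auto intro: countable_finite)
    moreover have "UNIV \<subseteq> K \<union> {0,1} \<union> Z \<union> B" using sub by auto
    ultimately show False using uncountable_UNIV_complex countable_subset by blast
  qed
  moreover have "q \<in> K"
    using basis q e_q unfolding K_def free_basis_def by (auto intro: in_gen)
  ultimately show ?thesis unfolding K_def by auto
qed

end
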